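(* Let $r\geq 3$ and let $D$ be an $m$-colored semicomplete $r$-partite digraph such that every directed $3$-cycle $\overrightarrow{C}_3$ and every directed $4$-cycle $\overrightarrow{C}_4$ contained in $D$ (as a subdigraph) is monochromatic. Let $x,y$ be distinct vertices of $D$. If there exists a directed path from $x$ to $y$ using exactly $2$ colors and there is no directed path from $y$ to $x$ using at most $2$ colors, then $d(x,y)\leq 2$.
   Context: A semicomplete $r$-partite digraph ($r\ge 2$) is a digraph whose vertex set is partitioned into $r$ nonempty independent sets (partite sets) such that for any two vertices $u,v$ in different partite sets at least one of the arcs $(u,v)$, $(v,u)$ is present (both may be present); there are no arcs inside a partite set. An $m$-colored digraph is a digraph whose arcs are each assigned one of $m$ colors. A directed path (no repeated vertices) is $j$-colored if its arcs use exactly $j$ distinct colors; it uses at most $k$ colors if it is $j$-colored for some $1\le j\le k$. A subdigraph is monochromatic if all its arcs have the same color. $\overrightarrow{C}_n$ is the directed cycle of length $n$. $d(x,y)$ denotes the minimum number of arcs of a directed path from $x$ to $y$. *)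

theory Defs
  imports Main "HOL-Library.Disjoint_Sets"
begin

definition semicomplete_multipartite :: "'a set \<Rightarrow> ('a \<times> 'a) set \<Rightarrow> 'a set set \<Rightarrow> bool" where
  "semicomplete_multipartite V A P \<longleftrightarrow>
     finite V \<and> A \<subseteq> V \<times> V \<and> partition_on V P \<and>
     (\<forall>X\<in>P. \<forall>u\<in>X. \<forall>v\<in>X. (u, v) \<notin> A) \<and>
     (\<forall>u\<in>V. \<forall>v\<in>V. (\<not> (\<exists>X\<in>P. u \<in> X \<and> v \<in> X)) \<longrightarrow> (u, v) \<in> A \<or> (v, u) \<in> A)"

definition path_arcs :: "'a list \<Rightarrow> ('a \<times> 'a) list" where
  "path_arcs p = zip p (tl p)"

definition dpath :: "('a \<times> 'a) set \<Rightarrow> 'a list \<Rightarrow> 'a \<Rightarrow> 'a \<Rightarrow> bool" where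
  "dpath A p x y \<longleftrightarrow> p \<noteq> [] \<and> hd p = x \<and> last p = y \<and> distinct p \<and>
     set (path_arcs p) \<subseteq> A"

definition path_colors :: "('a \<times> 'a \<Rightarrow> 'c) \<Rightarrow> 'a list \<Rightarrow> 'c set" where
  "path_colors col p = col ` set (path_arcs p)"

definition dcycle :: "('a \<times> 'a) set \<Rightarrow> nat \<Rightarrow> 'a list \<Rightarrow> bool" where
  "dcycle A n c \<longleftrightarrow> length c = n \<and> distinct c \<and>
     (\<forall>i<n. (c ! i, c ! (Suc i mod n)) \<in> A)"

definition mono_cycle :: "('a \<times> 'a \<Rightarrow> 'c) \<Rightarrow> 'a list \<Rightarrow> bool" where
  "mono_cycle col c \<longleftrightarrow> (\<forall>i<length c. \<forall>j<length c.
     col (c ! i, c ! (Suc i mod length c)) = col (c ! j, c ! (Suc j mod length c)))"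

end

theory Submission
  imports Defs
begin
lemma mono3: "mono_cycle col [a,b,c] \<Longrightarrow> col(a,b)=col(b,c) \<and> col(c,a)=col(b,c)"
proof -
  assume m: "mono_cycle col [a,b,c]"
  have h: "\<And>i j. i<3 \<Longrightarrow> j<3 \<Longrightarrow> col([a,b,c]!i, [a,b,c]!(Suc i mod 3)) = col([a,b,c]!j, [a,b,c]!(Suc j mod 3))"
    using m unfolding mono_cycle_def by simp
  have 1: "col(a,b)=col(b,c)" using h[of 0 1] by simp
  have 2: "col(c,a)=col(b,c)" using h[of 2 1] by simp
  show ?thesis using 1 2 by simp
qed
lemma mono4: "mono_cycle col [a,b,c,d] \<Longrightarrow> col(a,b)=col(b,c) \<and> col(c,d)=col(b,c) \<and> col(d,a)=col(b,c)"
proof -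
  assume m: "mono_cycle col [a,b,c,d]"
  have h: "\<And>i j. i<4 \<Longrightarrow> j<4 \<Longrightarrow> col([a,b,c,d]!i, [a,b,c,d]!(Suc i mod 4)) = col([a,b,c,d]!j, [a,b,c,d]!(Suc j mod 4))"
    using m unfolding mono_cycle_def by simp
  have 1: "col(a,b)=col(b,c)" using h[of 0 1] by simp
  have 2: "col(c,d)=col(b,c)" using h[of 2 1] by simp
  have 3: "col(d,a)=col(b,c)" using h[of 3 1] by simp
  show ?thesis using 1 2 3 by simp
qed
lemma dc3: "distinct [a,b,c] \<Longrightarrow> (a,b)\<in>A \<Longrightarrow> (b,c)\<in>A \<Longrightarrow> (c,a)\<in>A \<Longrightarrow> dcycle A 3 [a,b,c]"
  unfolding dcycle_def
proof (intro conjI allI impI)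
  fix i :: nat assume "i < 3" "(a,b)\<in>A" "(b,c)\<in>A" "(c,a)\<in>A"
  moreover have "i = 0 \<or> i = 1 \<or> i = 2" using \<open>i<3\<close> by arith
  ultimately show "([a,b,c] ! i, [a,b,c] ! (Suc i mod 3)) \<in> A" by auto
qed auto
lemma dc4: "distinct [a,b,c,d] \<Longrightarrow> (a,b)\<in>A \<Longrightarrow> (b,c)\<in>A \<Longrightarrow> (c,d)\<in>A \<Longrightarrow> (d,a)\<in>A \<Longrightarrow> dcycle A 4 [a,b,c,d]"
  unfolding dcycle_def
proof (intro conjI allI impI)
  fix i :: nat assume "i < 4" "(a,b)\<in>A" "(b,c)\<in>A" "(c,d)\<in>A" "(d,a)\<in>A"
  moreover have "i = 0 \<or> i = 1 \<or> i = 2 \<or> i = 3" using \<open>i<4\<close> by arith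
  ultimately show "([a,b,c,d] ! i, [a,b,c,d] ! (Suc i mod 4)) \<in> A" by auto
qed auto
lemma arcs: "dpath A p x y \<Longrightarrow> Suc i < length p \<Longrightarrow> (p!i, p!Suc i) \<in> A"
proof -
  assume a: "dpath A p x y" "Suc i < length p"
  have "(p!i, tl p ! i) \<in> set (zip p (tl p))" using a(2) by (auto simp: set_zip)
  thus ?thesis using a nth_tl[of i p] unfolding dpath_def path_arcs_def by auto
qed

theorem mainTheorem4:
  fixes V :: "'a set" and A :: "('a \<times> 'a) set" and P :: "'a set set"
    and col :: "'a \<times> 'a \<Rightarrow> 'c" and x y :: 'a
  assumes D: "semicomplete_multipartite V A P"
    and r: "card P \<ge> 3"
    and C3: "\<And>c. dcycle A 3 c \<Longrightarrow> mono_cycle col c"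
    and C4: "\<And>c. dcycle A 4 c \<Longrightarrow> mono_cycle col c"
    and xV: "x \<in> V" and yV: "y \<in> V" and xy: "x \<noteq> y"
    and two: "\<exists>p. dpath A p x y \<and> card (path_colors col p) = 2"
    and none: "\<not> (\<exists>q. dpath A q y x \<and> card (path_colors col q) \<le> 2)"
  shows "\<exists>p. dpath A p x y \<and> length p \<le> 3"
proof (rule ccontr)
  assume nc: "\<not> (\<exists>p. dpath A p x y \<and> length p \<le> 3)"
  have AV: "A \<subseteq> V \<times> V" and part: "partition_on V P"
    and noin: "\<And>X u v. X\<in>P \<Longrightarrow> u\<in>X \<Longrightarrow> v\<in>X \<Longrightarrow> (u,v)\<notin>A"
    and semi: "\<And>u v. u\<in>V \<Longrightarrow> v\<in>V \<Longrightarrow> \<not>(\<exists>X\<in>P. u\<in>X \<and> v\<in>X) \<Longrightarrow> (u,v)\<in>A \<or> (v,u)\<in>A"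
    using D unfolding semicomplete_multipartite_def by blast+
  have none': "\<And>q. dpath A q y x \<Longrightarrow> card (path_colors col q) \<le> 2 \<Longrightarrow> False" using none by blast
  have nxy: "(x,y) \<notin> A"
  proof
    assume "(x,y)\<in>A"
    hence "dpath A [x,y] x y" using xy by (simp add: dpath_def path_arcs_def)
    thus False using nc by fastforce
  qed
  have nyx: "(y,x) \<notin> A"
  proof
    assume "(y,x)\<in>A"
    hence "dpath A [y,x] y x" using xy by (simp add: dpath_def path_arcs_def)
    moreover have "card (path_colors col [y,x]) \<le> 2" by (simp add: path_colors_def path_arcs_def)
    ultimately show False using none' by blast
  qed
  obtain X where X: "X\<in>P" "x\<in>X" "y\<in>X" using semi[OF xV yV] nxy nyx by blast
  have Xuniq: "\<And>X' w. X'\<in>P \<Longrightarrow> x\<in>X' \<Longrightarrow> w\<in>X' \<Longrightarrow> w\<in>X"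
    using part X unfolding partition_on_def disjoint_def by blast
  have Xuniqy: "\<And>X' w. X'\<in>P \<Longrightarrow> y\<in>X' \<Longrightarrow> w\<in>X' \<Longrightarrow> w\<in>X"
    using part X unfolding partition_on_def disjoint_def by blast
  have noxzy: "\<And>z. (x,z)\<in>A \<Longrightarrow> (z,y)\<in>A \<Longrightarrow> False"
  proof -
    fix z assume a: "(x,z)\<in>A" "(z,y)\<in>A"
    have "z \<noteq> x" using a noin[OF X(1) X(2) X(2)] by auto
    moreover have "z \<noteq> y" using a noin[OF X(1) X(3) X(3)] by auto
    ultimately have "dpath A [x,z,y] x y" using a xy by (simp add: dpath_def path_arcs_def)
    thus False using nc by fastforce
  qed
  have noyzx: "\<And>z. (y,z)\<in>A \<Longrightarrow> (z,x)\<in>A \<Longrightarrow> False"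
  proof -
    fix z assume a: "(y,z)\<in>A" "(z,x)\<in>A"
    have "z \<noteq> x" using a noin[OF X(1) X(2) X(2)] by auto
    moreover have "z \<noteq> y" using a noin[OF X(1) X(3) X(3)] by auto
    ultimately have "dpath A [y,z,x] y x" using a xy by (simp add: dpath_def path_arcs_def)
    moreover have "card (path_colors col [y,z,x]) \<le> 2"
      by (simp add: path_colors_def path_arcs_def card_insert_if)
    ultimately show False using none' by blast
  qed
  define Out where "Out z \<longleftrightarrow> (x,z)\<in>A \<and> (y,z)\<in>A" for z
  define In where "In z \<longleftrightarrow> (z,x)\<in>A \<and> (z,y)\<in>A" for z
  have cls: "\<And>w. w\<in>V \<Longrightarrow> w\<notin>X \<Longrightarrow> Out w \<or> In w"
  proof -
    fix w assume w: "w\<in>V" "w\<notin>X"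
    have "\<not>(\<exists>X'\<in>P. x\<in>X' \<and> w\<in>X')" using w Xuniq by blast
    hence h1: "(x,w)\<in>A \<or> (w,x)\<in>A" using semi[OF xV w(1)] by blast
    have "\<not>(\<exists>X'\<in>P. y\<in>X' \<and> w\<in>X')" using w Xuniqy by blast
    hence h2: "(y,w)\<in>A \<or> (w,y)\<in>A" using semi[OF yV w(1)] by blast
    show "Out w \<or> In w" using h1 h2 noxzy noyzx unfolding Out_def In_def by blast
  qed
  have notX: "\<And>w v. (w,v)\<in>A \<Longrightarrow> v\<in>X \<Longrightarrow> w\<notin>X" "\<And>w v. (v,w)\<in>A \<Longrightarrow> v\<in>X \<Longrightarrow> w\<notin>X"
    using noin[OF X(1)] by blast+
  obtain p where p: "dpath A p x y" using two by blast
  define n where "n = length p"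
  have p0: "p!0 = x" and pl: "p!(n-1) = y" and dp: "distinct p" and n0: "n \<noteq> 0"
    using p unfolding dpath_def n_def by (auto simp: hd_conv_nth last_conv_nth)
  have n2: "n \<ge> 2" using p0 pl xy n0 by (cases "n = 1") auto
  have arc: "\<And>i. Suc i < n \<Longrightarrow> (p!i, p!Suc i) \<in> A" using arcs[OF p] n_def by blast
  have inV: "\<And>i. Suc i < n \<Longrightarrow> p!i \<in> V \<and> p!Suc i \<in> V" using arc AV by blast
  have n3: "n \<ge> 3"
  proof (rule ccontr)
    assume "\<not> n\<ge>3" hence "n = 2" using n2 by simp
    thus False using arc[of 0] p0 pl nxy by simp
  qed
  have dist: "\<And>i j. i<n \<Longrightarrow> j<n \<Longrightarrow> i\<noteq>j \<Longrightarrow> p!i \<noteq> p!j" using nth_eq_iff_index_eq[OF dp] n_def by auto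
  have ax: "\<And>i. 0<i \<Longrightarrow> i<n \<Longrightarrow> p!i \<noteq> x" using dist[of 0] p0 n3 by force
  have ay: "\<And>i. i<n-1 \<Longrightarrow> p!i \<noteq> y" using dist[of _ "n-1"] pl n3 by force
  have Out1: "Out (p!1)"
  proof -
    have a: "(x, p!1)\<in>A" using arc[of 0] p0 n3 by simp
    have "p!1 \<notin> X" using notX(2)[OF a X(2)] .
    thus ?thesis using cls inV[of 0] n3 a noxzy unfolding In_def by auto
  qed
  have Inl: "In (p!(n-2))"
  proof -
    have a: "(p!(n-2), y)\<in>A" using arc[of "n-2"] pl n3 by (simp add: Suc_diff_Suc numeral_2_eq_2)
    have "p!(n-2) \<notin> X" using notX(1)[OF a X(3)] .
    thus ?thesis using cls inV[of "n-2"] n3 a noxzy unfolding Out_def by (auto simp: Suc_diff_Suc numeral_2_eq_2)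
  qed
  have disj: "\<And>z. Out z \<Longrightarrow> In z \<Longrightarrow> False" using noxzy unfolding Out_def In_def by blast
  define j where "j = (LEAST j. In (p!j))"
  have Inj: "In (p!j)" unfolding j_def by (rule LeastI[where P="\<lambda>j. In (p!j)", OF Inl])
  have jle: "j \<le> n-2" unfolding j_def by (rule Least_le[where P="\<lambda>j. In (p!j)", OF Inl])
  have jmin: "\<And>i. i < j \<Longrightarrow> \<not> In (p!i)" unfolding j_def using not_less_Least by blast
  have j0: "j \<noteq> 0"
  proof
    assume "j = 0" hence "(x,x) \<in> A" using Inj p0 unfolding In_def by simp
    thus False using noin[OF X(1) X(2) X(2)] by simp
  qed
  have j1: "j \<noteq> 1" using Inj Out1 disj by auto
  have arcj: "(p!(j-1), p!j) \<in> A" using arc[of "j-1"] j0 jle n3 by simp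
  show False
  proof (cases "p!(j-1) \<in> X")
    case False
    have "p!(j-1) \<in> V" using inV[of "j-1"] j0 jle n3 by simp
    hence Ou: "Out (p!(j-1))" using cls False jmin[of "j-1"] j0 by auto
    define u where "u = p!(j-1)"
    define w where "w = p!j"
    have f: "u \<noteq> w" "u \<noteq> x" "w \<noteq> x" "u \<noteq> y" "w \<noteq> y" unfolding u_def w_def
      by (rule dist ax ay; use j0 j1 jle n3 in arith)+
    have d: "distinct [y,u,w,x]" using f xy by auto
    have a: "(u,w)\<in>A" using arcj u_def w_def by simp
    have c1: "dcycle A 3 [x,u,w]" using dc3[of x u w A] d a Ou Inj unfolding Out_def In_def u_def w_def by auto
    have c2: "dcycle A 3 [y,u,w]" using dc3[of y u w A] d a Ou Inj unfolding Out_def In_def u_def w_def by auto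
    have m1: "col(x,u)=col(u,w) \<and> col(w,x)=col(u,w)" using mono3[OF C3[OF c1]] .
    have m2: "col(y,u)=col(u,w) \<and> col(w,y)=col(u,w)" using mono3[OF C3[OF c2]] .
    have "dpath A [y,u,w,x] y x" using d a Ou Inj unfolding Out_def In_def u_def w_def
      by (simp add: dpath_def path_arcs_def)
    moreover have "card (path_colors col [y,u,w,x]) \<le> 2" using m1 m2
      by (simp add: path_colors_def path_arcs_def)
    ultimately show False using none' by blast
  next
    case True
    have j2: "j \<noteq> 2" proof
      assume "j = 2" hence "p!(j-1) = p!1" by simp
      thus False using True Out1 noin[OF X(1) X(2)] unfolding Out_def by auto
    qed
    have arcj2: "(p!(j-2), p!(j-1)) \<in> A" proof -
      have "Suc (j-2) = j-1" "Suc (j-2) < n" using j0 j1 j2 jle n3 by auto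
      thus ?thesis using arc[of "j-2"] by simp
    qed
    have "p!(j-2) \<notin> X" using notX(1)[OF arcj2 True] .
    moreover have "p!(j-2) \<in> V" using arcj2 AV by blast
    ultimately have Ou: "Out (p!(j-2))" using cls jmin[of "j-2"] j0 by auto
    define u where "u = p!(j-2)"
    define v where "v = p!(j-1)"
    define w where "w = p!j"
    have f: "u \<noteq> v" "u \<noteq> w" "v \<noteq> w" "u \<noteq> x" "v \<noteq> x" "w \<noteq> x" "u \<noteq> y" "v \<noteq> y" "w \<noteq> y"
      unfolding u_def v_def w_def
      by (rule dist ax ay; use j0 j1 j2 jle n3 in arith)+
    have d: "distinct [y,u,v,w,x]" using f xy by auto
    have a: "(u,v)\<in>A" "(v,w)\<in>A" using arcj arcj2 u_def v_def w_def by simp_all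
    have c1: "dcycle A 4 [x,u,v,w]" using dc4[of x u v w A] d a Ou Inj unfolding Out_def In_def u_def w_def by auto
    have c2: "dcycle A 4 [y,u,v,w]" using dc4[of y u v w A] d a Ou Inj unfolding Out_def In_def u_def w_def by auto
    have m1: "col(x,u)=col(u,v) \<and> col(v,w)=col(u,v) \<and> col(w,x)=col(u,v)" using mono4[OF C4[OF c1]] .
    have m2: "col(y,u)=col(u,v) \<and> col(v,w)=col(u,v) \<and> col(w,y)=col(u,v)" using mono4[OF C4[OF c2]] .
    have "dpath A [y,u,v,w,x] y x" using d a Ou Inj unfolding Out_def In_def u_def w_def
      by (simp add: dpath_def path_arcs_def)
    moreover have "card (path_colors col [y,u,v,w,x]) \<le> 2" using m1 m2
      by (simp add: path_colors_def path_arcs_def)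
    ultimately show False using none' by blast
  qed
qed

end
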